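(* Let $L$ be a finite periodic (toroidal) square lattice in two dimensions with lattice spacing $\Delta>0$, and for functions $f$ on $L$ write $\int f=\Delta^2\sum_{x\in L} f(x)$. Let $-\partial^2$ denote the lattice Laplacian (the finite-difference Laplacian, a positive semidefinite self-adjoint operator on functions on $L$). Fix $N\ge 1$, a constant $\mu>0$, a field $\hat M:L\to\{\text{real diagonal } N\times N \text{ matrices}\}$ and a source field $J:L\to\{\text{real } N\times N\text{ matrices}\}$, $x\mapsto (J_{ab}(x))_{a,b=1}^N$. For a field $O:L\to O(N)$ set $M(x)=O(x)^t\hat M(x)O(x)$ and let $K=K(O)$ be the operator on $\mathbb{C}^N$-valued functions on $L$ given by $$K_{aa'}=(-\partial^2+\mu)\,\delta_{aa'}-i\,M_{aa'},$$ where $M$ acts by pointwise multiplication by the matrix $M(x)$. Then $K(O)$ is invertible, and the function $$O\longmapsto \exp\Big[-\tfrac12\int J_{ab}\,(K_{aa'})^{-1}J_{a'b}\Big]$$ (summation over repeated indices $a,a',b$, the inverse $K^{-1}$ acting on the functions $x\mapsto J_{a'b}(x)$, $a'=1,\dots,N$, for each fixed $b$) is Lipschitz on the space of fields $O:L\to O(N)$ with respect to the metric $$d(O,O')=\int \|O-O'\|_{HS}=\Delta^2\sum_{x\in L}\|O(x)-O'(x)\|_{HS},$$ where $\|\cdot\|_{HS}$ is the Hilbert–Schmidt norm; i.e. there is a constant $C$ (depending on $J,\hat M,\mu$ and the lattice, but not on $O,O'$) such that the absolute difference of the function's values at $O$ and $O'$ is at most $C\,d(O,O')$.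
   Context: This is the lattice regularization of the $O(N)$ principal chiral model: $\hat M$ is the diagonalized (and contour-shifted by $i\mu$) Lagrange multiplier field, $O$ the pointwise diagonalizing orthogonal matrices, and $K$ the resulting quadratic form kernel after integrating out the original field. Indices $a,a',b$ range over $1,\dots,N$. *)

theory Defs
  imports "HOL-Analysis.Analysis"
begin

text \<open>Periodic lattice: sites (i,j) with i < n1, j < n2 (torus Z_n1 x Z_n2), spacing Delta.
  Internal (colour) indices a = 1..N are modelled by a finite type 'n with N = CARD('n).\<close>

definition sites :: "nat \<Rightarrow> nat \<Rightarrow> (nat \<times> nat) set" where
  "sites n1 n2 = {..<n1} \<times> {..<n2}"

definition lint :: "real \<Rightarrow> nat \<Rightarrow> nat \<Rightarrow> (nat \<times> nat \<Rightarrow> 'a::real_vector) \<Rightarrow> 'a" where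
  "lint Delta n1 n2 f = Delta\<^sup>2 *\<^sub>R (\<Sum>x\<in>sites n1 n2. f x)"

definition neg_lap :: "real \<Rightarrow> nat \<Rightarrow> nat \<Rightarrow> (nat \<times> nat \<Rightarrow> complex) \<Rightarrow> nat \<times> nat \<Rightarrow> complex" where
  "neg_lap Delta n1 n2 f x = (case x of (i, j) \<Rightarrow>
     (4 * f (i, j) - f ((i + 1) mod n1, j) - f ((i + n1 - 1) mod n1, j)
        - f (i, (j + 1) mod n2) - f (i, (j + n2 - 1) mod n2)) / complex_of_real (Delta\<^sup>2))"

definition fields :: "nat \<Rightarrow> nat \<Rightarrow> (nat \<times> nat \<Rightarrow> complex ^ 'n) set" where
  "fields n1 n2 = {F. \<forall>x. x \<notin> sites n1 n2 \<longrightarrow> F x = 0}"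

definition Mfield :: "(nat \<times> nat \<Rightarrow> real^'n^'n) \<Rightarrow> (nat \<times> nat \<Rightarrow> real^'n^'n) \<Rightarrow> nat \<times> nat \<Rightarrow> real^'n^'n" where
  "Mfield Mhat Q x = transpose (Q x) ** Mhat x ** Q x"

definition Kop :: "real \<Rightarrow> nat \<Rightarrow> nat \<Rightarrow> real \<Rightarrow> (nat \<times> nat \<Rightarrow> real^'n^'n)
    \<Rightarrow> (nat \<times> nat \<Rightarrow> complex ^ 'n) \<Rightarrow> (nat \<times> nat \<Rightarrow> complex ^ 'n)" where
  "Kop Delta n1 n2 mu M F = (\<lambda>x. if x \<in> sites n1 n2 then
      (\<chi> a. neg_lap Delta n1 n2 (\<lambda>y. F y $ a) x + complex_of_real mu * F x $ a
             - \<i> * (\<Sum>a'\<in>UNIV. complex_of_real (M x $ a $ a') * F x $ a'))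
    else 0)"

definition Jcol :: "nat \<Rightarrow> nat \<Rightarrow> (nat \<times> nat \<Rightarrow> real^'n^'n) \<Rightarrow> 'n \<Rightarrow> (nat \<times> nat \<Rightarrow> complex ^ 'n)" where
  "Jcol n1 n2 J b = (\<lambda>x. if x \<in> sites n1 n2 then (\<chi> a'. complex_of_real (J x $ a' $ b)) else 0)"

definition gen_fun :: "real \<Rightarrow> nat \<Rightarrow> nat \<Rightarrow> real \<Rightarrow> (nat \<times> nat \<Rightarrow> real^'n^'n)
    \<Rightarrow> (nat \<times> nat \<Rightarrow> real^'n^'n) \<Rightarrow> (nat \<times> nat \<Rightarrow> real^'n^'n) \<Rightarrow> complex" where
  "gen_fun Delta n1 n2 mu Mhat J Q =
     (let K = Kop Delta n1 n2 mu (Mfield Mhat Q);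
          G = (\<lambda>b. inv_into (fields n1 n2) K (Jcol n1 n2 J b))
      in exp (- (1/2) * lint Delta n1 n2
            (\<lambda>x. \<Sum>b\<in>UNIV. \<Sum>a\<in>UNIV. complex_of_real (J x $ a $ b) * (G b x $ a))))"

definition hs_norm :: "real^'n^'n \<Rightarrow> real" where
  "hs_norm A = sqrt (\<Sum>i\<in>UNIV. \<Sum>j\<in>UNIV. (A $ i $ j)\<^sup>2)"

definition field_dist :: "real \<Rightarrow> nat \<Rightarrow> nat \<Rightarrow> (nat \<times> nat \<Rightarrow> real^'n^'n) \<Rightarrow> (nat \<times> nat \<Rightarrow> real^'n^'n) \<Rightarrow> real" where
  "field_dist Delta n1 n2 Q Q' = lint Delta n1 n2 (\<lambda>x. hs_norm (Q x - Q' x))"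

end

theory Submission
  imports Defs "HOL-Library.Function_Algebras"
begin


definition sh1 :: "nat \<Rightarrow> nat \<times> nat \<Rightarrow> nat \<times> nat" where "sh1 n = (\<lambda>(i,j). ((i + 1) mod n, j))"
definition sh2 :: "nat \<Rightarrow> nat \<times> nat \<Rightarrow> nat \<times> nat" where "sh2 n = (\<lambda>(i,j). ((i + n - 1) mod n, j))"
definition sh3 :: "nat \<Rightarrow> nat \<times> nat \<Rightarrow> nat \<times> nat" where "sh3 n = (\<lambda>(i,j). (i, (j + 1) mod n))"
definition sh4 :: "nat \<Rightarrow> nat \<times> nat \<Rightarrow> nat \<times> nat" where "sh4 n = (\<lambda>(i,j). (i, (j + n - 1) mod n))"

lemma modp1: "i < (n::nat) \<Longrightarrow> Suc i mod n = (if Suc i = n then 0 else Suc i)"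
  by (cases "Suc i = n") auto
lemma modm1: "i < (n::nat) \<Longrightarrow> (i + n - Suc 0) mod n = (if i = 0 then n - 1 else i - 1)"
proof (cases "i = 0")
  case True assume "i < n" then show ?thesis using True by auto
next
  case False assume "i < n"
  then have "i + n - Suc 0 = (i - 1) + n" using False by auto
  then have "(i + n - Suc 0) mod n = (i - 1) mod n" by simp
  then show ?thesis using False \<open>i < n\<close> by simp
qed
lemma modpm: "i < (n::nat) \<Longrightarrow> (Suc i mod n + n - Suc 0) mod n = i"
  by (cases "Suc i = n") (auto simp: modp1 modm1)
lemma modmp: "i < (n::nat) \<Longrightarrow> Suc ((i + n - Suc 0) mod n) mod n = i"
  by (cases "i = 0") (auto simp: modm1 modp1)

lemma bij_sh12: "bij_betw (sh1 n1) (sites n1 n2) (sites n1 n2) \<and> bij_betw (sh2 n1) (sites n1 n2) (sites n1 n2)"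
proof -
  have a: "sh2 n1 (sh1 n1 x) = x" "sh1 n1 (sh2 n1 x) = x" if "x \<in> sites n1 n2" for x
    using that by (auto simp: sh1_def sh2_def sites_def modpm modmp split: prod.splits)
  have b: "sh1 n1 x \<in> sites n1 n2" "sh2 n1 x \<in> sites n1 n2" if "x \<in> sites n1 n2" for x
    using that by (auto simp: sh1_def sh2_def sites_def modpm modmp split: prod.splits)
  show ?thesis using a b
    by (metis bij_betw_byWitness image_subsetI)
qed

lemma bij_sh34: "bij_betw (sh3 n2) (sites n1 n2) (sites n1 n2) \<and> bij_betw (sh4 n2) (sites n1 n2) (sites n1 n2)"
proof -
  have a: "sh4 n2 (sh3 n2 x) = x" "sh3 n2 (sh4 n2 x) = x" if "x \<in> sites n1 n2" for x
    using that by (auto simp: sh3_def sh4_def sites_def modpm modmp split: prod.splits)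
  have b: "sh3 n2 x \<in> sites n1 n2" "sh4 n2 x \<in> sites n1 n2" if "x \<in> sites n1 n2" for x
    using that by (auto simp: sh3_def sh4_def sites_def modpm modmp split: prod.splits)
  show ?thesis using a b
    by (metis bij_betw_byWitness image_subsetI)
qed

definition mulM :: "real^'n^'n \<Rightarrow> complex^'n \<Rightarrow> complex^'n" where
  "mulM M v = (\<chi> a. \<i> * (\<Sum>a'\<in>UNIV. complex_of_real (M $ a $ a') * v $ a'))"

definition lapv :: "real \<Rightarrow> nat \<Rightarrow> nat \<Rightarrow> (nat \<times> nat \<Rightarrow> complex ^ 'n) \<Rightarrow> nat \<times> nat \<Rightarrow> complex^'n" where
  "lapv Delta n1 n2 F x = (1 / Delta\<^sup>2) *\<^sub>R (4 *\<^sub>R F x - F (sh1 n1 x) - F (sh2 n1 x) - F (sh3 n2 x) - F (sh4 n2 x))"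

lemma cscale: "(r::real) *\<^sub>R (z::complex) = complex_of_real r * z"
  by (simp add: scaleR_conv_of_real)

lemma Kop_eq: "x \<in> sites n1 n2 \<Longrightarrow> Kop Delta n1 n2 mu M F x = lapv Delta n1 n2 F x + mu *\<^sub>R F x - mulM (M x) (F x)"
  unfolding vec_eq_iff
  by (auto simp: Kop_def lapv_def mulM_def neg_lap_def sh1_def sh2_def sh3_def sh4_def
      cscale algebra_simps diff_divide_distrib add_divide_distrib split: prod.splits)



lemma sum_inner_shift:
  fixes F :: "'a \<Rightarrow> 'b::real_inner"
  assumes "finite S" "bij_betw s S S"
  shows "(\<Sum>x\<in>S. inner (F x) (F (s x))) \<le> (\<Sum>x\<in>S. (norm (F x))\<^sup>2)"
proof -
  have "(\<Sum>x\<in>S. inner (F x) (F (s x))) \<le> (\<Sum>x\<in>S. ((norm (F x))\<^sup>2 + (norm (F (s x)))\<^sup>2) / 2)"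
  proof (rule sum_mono)
    fix x
    have "inner (F x) (F (s x)) \<le> norm (F x) * norm (F (s x))" by (rule norm_cauchy_schwarz)
    also have "\<dots> \<le> ((norm (F x))\<^sup>2 + (norm (F (s x)))\<^sup>2) / 2"
    proof -
      have "0 \<le> (norm (F x) - norm (F (s x)))\<^sup>2" by simp
      then show ?thesis by (simp add: power2_diff)
    qed
    finally show "inner (F x) (F (s x)) \<le> ((norm (F x))\<^sup>2 + (norm (F (s x)))\<^sup>2) / 2" .
  qed
  also have "\<dots> = ((\<Sum>x\<in>S. (norm (F x))\<^sup>2) + (\<Sum>x\<in>S. (norm (F (s x)))\<^sup>2)) / 2"
    by (simp only: sum_divide_distrib[symmetric] sum.distrib)
  also have "(\<Sum>x\<in>S. (norm (F (s x)))\<^sup>2) = (\<Sum>x\<in>S. (norm (F x))\<^sup>2)"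
    using sum.reindex_bij_betw[OF assms(2), of "\<lambda>y. (norm (F y))\<^sup>2"] by simp
  finally show ?thesis by simp
qed

lemma inner_mulM:
  fixes v :: "complex^'n"
  assumes "transpose M = M"
  shows "inner v (mulM M v) = 0"
proof -
  have sym: "M $ a $ b = M $ b $ a" for a b
    using assms by (metis transpose_def vec_lambda_beta)
  define T where "T = (\<Sum>a\<in>UNIV. \<Sum>b\<in>UNIV. M $ a $ b * (Re (v $ a) * Im (v $ b)))"
  define U where "U = (\<Sum>a\<in>UNIV. \<Sum>b\<in>UNIV. M $ a $ b * (Im (v $ a) * Re (v $ b)))"
  have "U = (\<Sum>b\<in>UNIV. \<Sum>a\<in>UNIV. M $ a $ b * (Im (v $ a) * Re (v $ b)))"
    unfolding U_def by (rule sum.swap)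
  also have "\<dots> = T" unfolding T_def
    by (intro sum.cong refl) (simp add: sym mult_ac)
  finally have UT: "U = T" .
  have "inner v (mulM M v) = (\<Sum>a\<in>UNIV. - Re (v $ a) * (\<Sum>b\<in>UNIV. M $ a $ b * Im (v $ b))
        + Im (v $ a) * (\<Sum>b\<in>UNIV. M $ a $ b * Re (v $ b)))"
    by (simp add: inner_vec_def mulM_def inner_complex_def Re_sum Im_sum)
  also have "\<dots> = U - T"
    unfolding U_def T_def
    by (simp add: sum_subtractf[symmetric] sum.distrib[symmetric] sum_distrib_left mult.assoc mult.left_commute)
  finally show ?thesis using UT by simp
qed

lemma inner_lapv:
  fixes F :: "nat \<times> nat \<Rightarrow> complex^'n"
  assumes "Delta > 0"
  shows "0 \<le> (\<Sum>x\<in>sites n1 n2. inner (F x) (lapv Delta n1 n2 F x))"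
proof -
  let ?S = "sites n1 n2"
  have fin: "finite ?S" by (simp add: sites_def)
  have "(\<Sum>x\<in>?S. inner (F x) (lapv Delta n1 n2 F x)) = (1 / Delta\<^sup>2) *
     ((\<Sum>x\<in>?S. 4 * (norm (F x))\<^sup>2) - (\<Sum>x\<in>?S. inner (F x) (F (sh1 n1 x)))
      - (\<Sum>x\<in>?S. inner (F x) (F (sh2 n1 x))) - (\<Sum>x\<in>?S. inner (F x) (F (sh3 n2 x)))
      - (\<Sum>x\<in>?S. inner (F x) (F (sh4 n2 x))))"
    by (simp add: lapv_def inner_diff_right power2_norm_eq_inner sum_divide_distrib[symmetric] sum_subtractf)
  moreover have "(\<Sum>x\<in>?S. inner (F x) (F (sh1 n1 x))) \<le> (\<Sum>x\<in>?S. (norm (F x))\<^sup>2)"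
    "(\<Sum>x\<in>?S. inner (F x) (F (sh2 n1 x))) \<le> (\<Sum>x\<in>?S. (norm (F x))\<^sup>2)"
    "(\<Sum>x\<in>?S. inner (F x) (F (sh3 n2 x))) \<le> (\<Sum>x\<in>?S. (norm (F x))\<^sup>2)"
    "(\<Sum>x\<in>?S. inner (F x) (F (sh4 n2 x))) \<le> (\<Sum>x\<in>?S. (norm (F x))\<^sup>2)"
    by (rule sum_inner_shift[OF fin], use bij_sh12 bij_sh34 in blast)+
  moreover have "(\<Sum>x\<in>?S. 4 * (norm (F x))\<^sup>2) = 4 * (\<Sum>x\<in>?S. (norm (F x))\<^sup>2)"
    by (simp add: sum_distrib_left)
  ultimately show ?thesis using assms by simp
qed

lemma coercive:
  fixes F :: "nat \<times> nat \<Rightarrow> complex^'n"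
  assumes "Delta > 0" "\<forall>x\<in>sites n1 n2. transpose (M x) = M x"
  shows "mu * (\<Sum>x\<in>sites n1 n2. (norm (F x))\<^sup>2) \<le> (\<Sum>x\<in>sites n1 n2. inner (F x) (Kop Delta n1 n2 mu M F x))"
proof -
  have "(\<Sum>x\<in>sites n1 n2. inner (F x) (Kop Delta n1 n2 mu M F x)) =
     (\<Sum>x\<in>sites n1 n2. inner (F x) (lapv Delta n1 n2 F x) + mu * (norm (F x))\<^sup>2)"
    using assms(2) by (intro sum.cong refl) (simp add: Kop_eq inner_add_right inner_diff_right inner_mulM power2_norm_eq_inner)
  also have "\<dots> = (\<Sum>x\<in>sites n1 n2. inner (F x) (lapv Delta n1 n2 F x)) + mu * (\<Sum>x\<in>sites n1 n2. (norm (F x))\<^sup>2)"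
    by (simp add: sum.distrib sum_distrib_left)
  finally show ?thesis using inner_lapv[OF assms(1), of F n1 n2] by simp
qed



lemma fin_sites[simp]: "finite (sites n1 n2)"
  by (simp add: sites_def)

lemma (in vector_space) inj_on_surj_subspace:
  assumes lin: "Vector_Spaces.linear scale scale f" and sub: "subspace V" and fin: "finite B0" and sp: "V \<subseteq> span B0"
    and into: "f ` V \<subseteq> V" and inj: "inj_on f V"
  shows "f ` V = V"
proof -
  obtain B where B: "B \<subseteq> V" "independent B" "V \<subseteq> span B" "card B = dim V"
    using basis_exists by blast
  have finB: "finite B" using independent_span_bound[OF fin B(2)] B(1) sp by blast
  have spanB: "span B = V" using B span_minimal[of B V] sub by blast
  interpret P: vector_space_pair scale scale by unfold_locales
  have indC: "independent (f ` B)"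
    using P.linear_independent_injective_image[OF lin B(2)] inj spanB by auto
  have cardC: "card (f ` B) = card B" using card_image inj_on_subset[OF inj B(1)] by blast
  have CV: "f ` B \<subseteq> V" using B(1) into by blast
  have "V \<subseteq> span (f ` B)"
  proof
    fix v assume v: "v \<in> V"
    show "v \<in> span (f ` B)"
    proof (rule ccontr)
      assume nv: "v \<notin> span (f ` B)"
      then have "independent (insert v (f ` B))" using indC independent_insertI by auto
      moreover have "insert v (f ` B) \<subseteq> span B" using v CV spanB by auto
      ultimately have "card (insert v (f ` B)) \<le> card B" using independent_span_bound[OF finB] by blast
      moreover have "v \<notin> f ` B" using nv span_superset by blast
      ultimately show False using cardC finB by simp
    qed
  qed
  then have "V \<subseteq> f ` span B" using P.linear_span_image[OF lin] by simp
  then show ?thesis using spanB into by auto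
qed

definition fsc :: "real \<Rightarrow> ('x \<Rightarrow> 'v::real_vector) \<Rightarrow> 'x \<Rightarrow> 'v" where
  "fsc c F = (\<lambda>x. c *\<^sub>R F x)"

lemma vs_fsc: "vector_space (fsc :: real \<Rightarrow> ('x \<Rightarrow> 'v::real_vector) \<Rightarrow> 'x \<Rightarrow> 'v)"
  by unfold_locales (auto simp: fsc_def fun_eq_iff scaleR_add_right scaleR_add_left)

lemma mulM_add: "mulM M (u + v) = mulM M u + mulM M v"
  by (simp add: mulM_def vec_eq_iff distrib_left sum.distrib)
lemma mulM_scale: "mulM M (c *\<^sub>R v) = c *\<^sub>R mulM M v"
  by (simp add: mulM_def vec_eq_iff cscale sum_distrib_left mult_ac)

lemma Kop_add: "Kop Delta n1 n2 mu M (F + G) = Kop Delta n1 n2 mu M F + Kop Delta n1 n2 mu M G"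
proof (rule ext)
  fix x show "Kop Delta n1 n2 mu M (F + G) x = (Kop Delta n1 n2 mu M F + Kop Delta n1 n2 mu M G) x"
  proof (cases "x \<in> sites n1 n2")
    case True
    then show ?thesis by (simp add: Kop_eq mulM_add lapv_def algebra_simps)
  next
    case False
    then show ?thesis by (simp add: Kop_def)
  qed
qed

lemma Kop_scale: "Kop Delta n1 n2 mu M (fsc c F) = fsc c (Kop Delta n1 n2 mu M F)"
proof (rule ext)
  fix x show "Kop Delta n1 n2 mu M (fsc c F) x = fsc c (Kop Delta n1 n2 mu M F) x"
  proof (cases "x \<in> sites n1 n2")
    case True
    then show ?thesis by (simp add: Kop_eq mulM_scale lapv_def fsc_def algebra_simps)
  next
    case False
    then show ?thesis by (simp add: Kop_def fsc_def)
  qed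
qed

lemma Kop_linear: "Vector_Spaces.linear fsc fsc (Kop Delta n1 n2 mu M)"
  unfolding Vector_Spaces.linear_iff using vs_fsc Kop_add Kop_scale by blast

lemma sum_fun_apply: "(\<Sum>i\<in>A. f i) y = (\<Sum>i\<in>A. f i y)"
  by (induction A rule: infinite_finite_induct) auto

definition evec :: "nat \<times> nat \<Rightarrow> 'n \<Rightarrow> complex \<Rightarrow> nat \<times> nat \<Rightarrow> complex^'n" where
  "evec x a c = (\<lambda>y. if y = x then axis a c else 0)"

lemma fields_span:
  fixes F :: "nat \<times> nat \<Rightarrow> complex^'n"
  assumes "F \<in> fields n1 n2"
  shows "F \<in> module.span fsc ((\<lambda>(x,a,c). evec x a c) ` (sites n1 n2 \<times> UNIV \<times> {1, \<i>}))"
proof -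
  interpret V: vector_space "fsc :: real \<Rightarrow> (nat \<times> nat \<Rightarrow> complex^'n) \<Rightarrow> _" by (rule vs_fsc)
  let ?B = "(\<lambda>(x,a,c). evec x a c) ` (sites n1 n2 \<times> UNIV \<times> {1, \<i>})"
  have eq: "F = (\<Sum>x\<in>sites n1 n2. \<Sum>a\<in>UNIV. fsc (Re (F x $ a)) (evec x a 1) + fsc (Im (F x $ a)) (evec x a \<i>))"
  proof (rule ext)
    fix y
    show "F y = (\<Sum>x\<in>sites n1 n2. \<Sum>a\<in>UNIV. fsc (Re (F x $ a)) (evec x a 1) + fsc (Im (F x $ a)) (evec x a \<i>)) y"
      unfolding vec_eq_iff
    proof
      fix b
      have "(\<Sum>x\<in>sites n1 n2. \<Sum>a\<in>UNIV. fsc (Re (F x $ a)) (evec x a 1) + fsc (Im (F x $ a)) (evec x a \<i>)) y $ b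
         = (\<Sum>x\<in>sites n1 n2. if y = x then F x $ b else 0)"
      proof -
        have re: "complex_of_real (Re z) + complex_of_real (Im z) * \<i> = z" for z
          by (simp add: complex_eq_iff)
        have t: "fsc (Re (F x $ a)) (evec x a 1) y $ b + fsc (Im (F x $ a)) (evec x a \<i>) y $ b
            = (if a = b then (if y = x then F x $ b else 0) else 0)" for x a
          by (auto simp: fsc_def evec_def axis_def cscale re)
        show ?thesis
          by (simp only: sum_fun_apply sum_component plus_fun_apply vector_add_component t) (simp add: sum.delta')
      qed
      also have "\<dots> = F y $ b" using assms
        by (cases "y \<in> sites n1 n2") (simp_all add: fields_def sum.delta' prod.case_eq_if, metis prod.collapse zero_index)
      finally show "F y $ b = (\<Sum>x\<in>sites n1 n2. \<Sum>a\<in>UNIV. fsc (Re (F x $ a)) (evec x a 1) + fsc (Im (F x $ a)) (evec x a \<i>)) y $ b" by simp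
    qed
  qed
  have "(\<Sum>x\<in>sites n1 n2. \<Sum>a\<in>UNIV. fsc (Re (F x $ a)) (evec x a 1) + fsc (Im (F x $ a)) (evec x a \<i>)) \<in> V.span ?B"
  proof -
    have hB: "evec x a c \<in> ?B" if "x \<in> sites n1 n2" "c \<in> {1, \<i>}" for x a c
      by (rule image_eqI[where x="(x,a,c)"]) (use that in auto)
    show ?thesis
      by (intro V.span_sum V.span_add V.span_scale V.span_base hB) auto
  qed
  then show ?thesis using eq by simp
qed



lemma Kop_in_fields: "Kop Delta n1 n2 mu M F \<in> fields n1 n2"
  by (simp add: Kop_def fields_def)

lemma Kop_diff: "Kop Delta n1 n2 mu M (F - G) = Kop Delta n1 n2 mu M F - Kop Delta n1 n2 mu M G"
proof -
  have "Kop Delta n1 n2 mu M (F - G) + Kop Delta n1 n2 mu M G = Kop Delta n1 n2 mu M F"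
    using Kop_add[of Delta n1 n2 mu M "F - G" G] by simp
  then show ?thesis by (simp add: eq_diff_eq)
qed

lemma fields_diff: "F \<in> fields n1 n2 \<Longrightarrow> G \<in> fields n1 n2 \<Longrightarrow> F - G \<in> fields n1 n2"
  by (simp add: fields_def)

lemma Kop_zero:
  fixes F :: "nat \<times> nat \<Rightarrow> complex^'n"
  assumes "Delta > 0" "mu > 0" "\<forall>x\<in>sites n1 n2. transpose (M x) = M x"
    and "F \<in> fields n1 n2" and "Kop Delta n1 n2 mu M F = 0"
  shows "F = 0"
proof -
  have "mu * (\<Sum>x\<in>sites n1 n2. (norm (F x))\<^sup>2) \<le> 0"
    using coercive[OF assms(1) assms(3), of mu F] assms(5) by simp
  then have "(\<Sum>x\<in>sites n1 n2. (norm (F x))\<^sup>2) \<le> 0" using assms(2)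
    by (simp add: mult_le_0_iff)
  then have "(\<Sum>x\<in>sites n1 n2. (norm (F x))\<^sup>2) = 0"
    by (meson antisym sum_nonneg zero_le_power2)
  then have "\<forall>x\<in>sites n1 n2. (norm (F x))\<^sup>2 = 0"
    by (simp add: sum_nonneg_eq_0_iff)
  then show ?thesis using assms(4) by (auto simp: fields_def fun_eq_iff)
qed

lemma Kop_bij:
  fixes M :: "nat \<times> nat \<Rightarrow> real^'n^'n"
  assumes "Delta > 0" "mu > 0" "\<forall>x\<in>sites n1 n2. transpose (M x) = M x"
  shows "bij_betw (Kop Delta n1 n2 mu M) (fields n1 n2 :: (nat \<times> nat \<Rightarrow> complex^'n) set) (fields n1 n2)"
proof -
  interpret V: vector_space "fsc :: real \<Rightarrow> (nat \<times> nat \<Rightarrow> complex^'n) \<Rightarrow> _" by (rule vs_fsc)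
  let ?K = "Kop Delta n1 n2 mu M"
  let ?V = "fields n1 n2 :: (nat \<times> nat \<Rightarrow> complex^'n) set"
  have inj: "inj_on ?K ?V"
  proof (rule inj_onI)
    fix F G assume F: "F \<in> ?V" and G: "G \<in> ?V" and eq: "?K F = ?K G"
    have "?K (F - G) = 0" using eq by (simp add: Kop_diff)
    then have "F - G = 0" using Kop_zero[OF assms fields_diff[OF F G]] by simp
    then show "F = G" by simp
  qed
  have sub: "V.subspace ?V"
    unfolding V.subspace_def by (auto simp: fields_def fsc_def)
  let ?B = "(\<lambda>(x,a,c). evec x a c) ` (sites n1 n2 \<times> (UNIV :: 'n set) \<times> {1, \<i>})"
  have spn: "?V \<subseteq> V.span ?B" using fields_span by blast
  have finB: "finite ?B" by simp
  have "?K ` ?V = ?V"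
    by (rule V.inj_on_surj_subspace[OF Kop_linear sub finB spn _ inj]) (auto simp: Kop_in_fields)
  then show ?thesis using inj by (simp add: bij_betw_def)
qed

lemma Mfield_sym:
  assumes "\<forall>x a b. a \<noteq> b \<longrightarrow> Mhat x $ a $ b = 0"
  shows "transpose (Mfield Mhat Q x) = Mfield Mhat Q x"
proof -
  have e: "Mhat x $ i $ j = Mhat x $ j $ i" for i j
  proof (cases "i = j")
    case False
    have "Mhat x $ i $ j = 0" "Mhat x $ j $ i = 0"
      using assms[rule_format, of i j x] assms[rule_format, of j i x] False by auto
    then show ?thesis by simp
  qed simp
  have "transpose (Mhat x) = Mhat x"
    using e by (auto simp: vec_eq_iff transpose_def)
  then show ?thesis
    by (simp add: Mfield_def matrix_transpose_mul matrix_mul_assoc)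
qed



definition nrm :: "nat \<Rightarrow> nat \<Rightarrow> (nat \<times> nat \<Rightarrow> complex^'n) \<Rightarrow> real" where
  "nrm n1 n2 F = L2_set (\<lambda>x. norm (F x)) (sites n1 n2)"

lemma nrm_sq: "(nrm n1 n2 F)\<^sup>2 = (\<Sum>x\<in>sites n1 n2. (norm (F x))\<^sup>2)"
  by (simp add: nrm_def L2_set_def sum_nonneg)

lemma nrm_nonneg: "0 \<le> nrm n1 n2 F" by (simp add: nrm_def)

lemma sum_inner_le: "(\<Sum>x\<in>sites n1 n2. inner (F x) (H x)) \<le> nrm n1 n2 F * nrm n1 n2 H"
proof -
  have "(\<Sum>x\<in>sites n1 n2. inner (F x) (H x)) \<le> (\<Sum>x\<in>sites n1 n2. \<bar>norm (F x)\<bar> * \<bar>norm (H x)\<bar>)"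
    by (rule sum_mono) (simp add: norm_cauchy_schwarz)
  also have "\<dots> \<le> nrm n1 n2 F * nrm n1 n2 H"
    unfolding nrm_def by (rule L2_set_mult_ineq)
  finally show ?thesis .
qed

lemma inv_bound:
  fixes F :: "nat \<times> nat \<Rightarrow> complex^'n"
  assumes "Delta > 0" "mu > 0" "\<forall>x\<in>sites n1 n2. transpose (M x) = M x"
  shows "mu * nrm n1 n2 F \<le> nrm n1 n2 (Kop Delta n1 n2 mu M F)"
proof -
  have "mu * (nrm n1 n2 F)\<^sup>2 \<le> nrm n1 n2 F * nrm n1 n2 (Kop Delta n1 n2 mu M F)"
    using coercive[OF assms(1) assms(3), of mu F] sum_inner_le[of F "Kop Delta n1 n2 mu M F" n1 n2]
    by (simp add: nrm_sq)
  then have h: "(mu * nrm n1 n2 F) * nrm n1 n2 F \<le> nrm n1 n2 (Kop Delta n1 n2 mu M F) * nrm n1 n2 F"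
    by (simp add: power2_eq_square mult_ac)
  show ?thesis
  proof (cases "nrm n1 n2 F = 0")
    case True then show ?thesis by (simp add: nrm_nonneg)
  next
    case False
    then have "nrm n1 n2 F > 0" using nrm_nonneg[of n1 n2 F] by linarith
    then show ?thesis using mult_right_le_imp_le[OF h] by blast
  qed
qed

lemma re_nonneg:
  fixes G :: "nat \<times> nat \<Rightarrow> complex^'n"
  assumes "Delta > 0" "mu > 0" "\<forall>x\<in>sites n1 n2. transpose (M x) = M x"
    and KG: "Kop Delta n1 n2 mu M G = Jcol n1 n2 J b"
  shows "0 \<le> Re (\<Sum>x\<in>sites n1 n2. \<Sum>a\<in>UNIV. complex_of_real (J x $ a $ b) * G x $ a)"
proof -
  have "Re (\<Sum>x\<in>sites n1 n2. \<Sum>a\<in>UNIV. complex_of_real (J x $ a $ b) * G x $ a)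
      = (\<Sum>x\<in>sites n1 n2. inner (Jcol n1 n2 J b x) (G x))"
    by (simp add: Re_sum inner_vec_def inner_complex_def Jcol_def)
  also have "\<dots> = (\<Sum>x\<in>sites n1 n2. inner (G x) (Kop Delta n1 n2 mu M G x))"
    by (simp add: KG inner_commute)
  also have "\<dots> \<ge> mu * (\<Sum>x\<in>sites n1 n2. (norm (G x))\<^sup>2)"
    by (rule coercive[OF assms(1) assms(3)])
  moreover have "0 \<le> mu * (\<Sum>x\<in>sites n1 n2. (norm (G x))\<^sup>2)"
    using assms(2) by (simp add: sum_nonneg)
  ultimately show ?thesis by linarith
qed

lemma exp_lip:
  fixes z w :: complex
  assumes "Re z \<le> 0" "Re w \<le> 0"
  shows "cmod (exp z - exp w) \<le> cmod (z - w)"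
proof -
  have "cmod (exp z - exp w) \<le> 1 * cmod (z - w)"
  proof (rule field_differentiable_bound[where S="{z. Re z \<le> 0}" and f'=exp])
    show "convex {z. Re z \<le> 0}" by (rule convex_halfspace_Re_le)
    show "(exp has_field_derivative exp u) (at u within {z. Re z \<le> 0})" for u
      by (rule has_field_derivative_at_within) (rule DERIV_exp)
    show "cmod (exp u) \<le> 1" if "u \<in> {z. Re z \<le> 0}" for u using that by simp
  qed (use assms in auto)
  then show ?thesis by simp
qed

lemma mulM_norm: "norm (mulM A v) \<le> (\<Sum>a\<in>UNIV. \<Sum>a'\<in>UNIV. \<bar>A $ a $ a'\<bar>) * norm v"
proof -
  have "norm (mulM A v) \<le> (\<Sum>a\<in>UNIV. norm (mulM A v $ a))"
    unfolding norm_vec_def by (rule L2_set_le_sum) simp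
  also have "\<dots> \<le> (\<Sum>a\<in>UNIV. (\<Sum>a'\<in>UNIV. \<bar>A $ a $ a'\<bar>) * norm v)"
  proof (rule sum_mono)
    fix a
    have "norm (mulM A v $ a) = norm (\<Sum>a'\<in>UNIV. complex_of_real (A $ a $ a') * v $ a')"
      by (simp add: mulM_def norm_mult)
    also have "\<dots> \<le> (\<Sum>a'\<in>UNIV. norm (complex_of_real (A $ a $ a') * v $ a'))"
      by (rule norm_sum)
    also have "\<dots> \<le> (\<Sum>a'\<in>UNIV. \<bar>A $ a $ a'\<bar> * norm v)"
    proof (rule sum_mono)
      fix a'
      have "norm (v $ a') \<le> norm v" by (rule Finite_Cartesian_Product.norm_nth_le)
      then have "\<bar>A $ a $ a'\<bar> * norm (v $ a') \<le> \<bar>A $ a $ a'\<bar> * norm v"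
        by (rule mult_left_mono) simp
      then show "norm (complex_of_real (A $ a $ a') * v $ a') \<le> \<bar>A $ a $ a'\<bar> * norm v"
        by (simp add: norm_mult)
    qed
    finally show "norm (mulM A v $ a) \<le> (\<Sum>a'\<in>UNIV. \<bar>A $ a $ a'\<bar>) * norm v"
      by (simp add: sum_distrib_right)
  qed
  also have "\<dots> = (\<Sum>a\<in>UNIV. \<Sum>a'\<in>UNIV. \<bar>A $ a $ a'\<bar>) * norm v"
    by (simp add: sum_distrib_right)
  finally show ?thesis .
qed

lemma mulM_diffM: "mulM A v - mulM B v = mulM (A - B) v"
  by (simp add: mulM_def vec_eq_iff right_diff_distrib[symmetric] sum_subtractf[symmetric] left_diff_distrib)

lemma Kop_diffM: "x \<in> sites n1 n2 \<Longrightarrow>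
   Kop Delta n1 n2 mu M' G x - Kop Delta n1 n2 mu M G x = mulM (M x - M' x) (G x)"
  by (simp add: Kop_eq mulM_diffM[symmetric])

lemma Mfield_entry:
  assumes "\<forall>x a b. a \<noteq> b \<longrightarrow> Mhat x $ a $ b = 0"
  shows "Mfield Mhat Q x $ a $ a' = (\<Sum>k\<in>UNIV. Q x $ k $ a * Mhat x $ k $ k * Q x $ k $ a')"
proof -
  have d: "Mhat x $ c $ k = (if c = k then Mhat x $ k $ k else 0)" for c k
    using assms[rule_format, of c k x] by auto
  have "Mfield Mhat Q x $ a $ a' = (\<Sum>k\<in>UNIV. (\<Sum>c\<in>UNIV. Q x $ c $ a * Mhat x $ c $ k) * Q x $ k $ a')"
    by (simp add: Mfield_def matrix_matrix_mult_def transpose_def)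
  also have "\<dots> = (\<Sum>k\<in>UNIV. Q x $ k $ a * Mhat x $ k $ k * Q x $ k $ a')"
    by (subst d) (simp add: if_distrib sum.delta' cong: if_cong)
  finally show ?thesis .
qed

lemma orth_entry:
  assumes "orthogonal_matrix (Q :: real^'n^'n)"
  shows "\<bar>Q $ i $ j\<bar> \<le> 1"
proof -
  have "norm (column j Q) = 1" using assms orthogonal_matrix_orthonormal_columns by blast
  moreover have "\<bar>column j Q $ i\<bar> \<le> norm (column j Q)" by (rule component_le_norm_cart)
  ultimately show ?thesis by (simp add: column_def)
qed

lemma hs_entry: "\<bar>A $ i $ j\<bar> \<le> hs_norm A"
proof -
  have "(A $ i $ j)\<^sup>2 \<le> (\<Sum>j'\<in>UNIV. (A $ i $ j')\<^sup>2)"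
    by (rule member_le_sum) auto
  also have "\<dots> \<le> (\<Sum>i'\<in>UNIV. \<Sum>j'\<in>UNIV. (A $ i' $ j')\<^sup>2)"
    by (rule member_le_sum[where f="\<lambda>i'. \<Sum>j'\<in>UNIV. (A $ i' $ j')\<^sup>2"]) (auto intro: sum_nonneg)
  finally have "\<bar>A $ i $ j\<bar>\<^sup>2 \<le> (\<Sum>i'\<in>UNIV. \<Sum>j'\<in>UNIV. (A $ i' $ j')\<^sup>2)" by simp
  then show ?thesis unfolding hs_norm_def by (rule real_le_rsqrt)
qed

lemma Mdiff_entry:
  assumes diag: "\<forall>x a b. a \<noteq> b \<longrightarrow> Mhat x $ a $ b = 0"
    and oQ: "orthogonal_matrix (Q x)" and oQ': "orthogonal_matrix (Q' x)"
  shows "\<bar>Mfield Mhat Q x $ a $ a' - Mfield Mhat Q' x $ a $ a'\<bar>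
     \<le> 2 * (\<Sum>k\<in>UNIV. \<bar>Mhat x $ k $ k\<bar>) * hs_norm (Q x - Q' x)"
proof -
  let ?h = "hs_norm (Q x - Q' x)"
  have e: "\<bar>Q x $ k $ a * Q x $ k $ a' - Q' x $ k $ a * Q' x $ k $ a'\<bar> \<le> 2 * ?h" for k
  proof -
    have 1: "\<bar>Q x $ k $ a - Q' x $ k $ a\<bar> \<le> ?h" "\<bar>Q x $ k $ a' - Q' x $ k $ a'\<bar> \<le> ?h"
      using hs_entry[of "Q x - Q' x" k a] hs_entry[of "Q x - Q' x" k a'] by simp_all
    have 2: "\<bar>Q x $ k $ a'\<bar> \<le> 1" "\<bar>Q' x $ k $ a\<bar> \<le> 1"
      using orth_entry[OF oQ] orth_entry[OF oQ'] by auto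
    have "Q x $ k $ a * Q x $ k $ a' - Q' x $ k $ a * Q' x $ k $ a'
       = (Q x $ k $ a - Q' x $ k $ a) * Q x $ k $ a' + Q' x $ k $ a * (Q x $ k $ a' - Q' x $ k $ a')"
      by (simp add: algebra_simps)
    also have "\<bar>\<dots>\<bar> \<le> \<bar>Q x $ k $ a - Q' x $ k $ a\<bar> * \<bar>Q x $ k $ a'\<bar> + \<bar>Q' x $ k $ a\<bar> * \<bar>Q x $ k $ a' - Q' x $ k $ a'\<bar>"
      by (rule order_trans[OF abs_triangle_ineq]) (simp add: abs_mult)
    also have "\<dots> \<le> ?h * 1 + 1 * ?h"
      by (intro add_mono mult_mono) (use 1 2 in auto)
    finally show ?thesis by simp
  qed
  have "Mfield Mhat Q x $ a $ a' - Mfield Mhat Q' x $ a $ a'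
      = (\<Sum>k\<in>UNIV. Mhat x $ k $ k * (Q x $ k $ a * Q x $ k $ a' - Q' x $ k $ a * Q' x $ k $ a'))"
    by (simp add: Mfield_entry[OF diag] sum_subtractf[symmetric] algebra_simps)
  also have "\<bar>\<dots>\<bar> \<le> (\<Sum>k\<in>UNIV. \<bar>Mhat x $ k $ k\<bar> * (2 * ?h))"
    by (rule order_trans[OF sum_abs sum_mono]) (simp add: abs_mult mult_left_mono e)
  also have "(\<Sum>k\<in>UNIV. \<bar>Mhat x $ k $ k\<bar> * (2 * ?h)) = (\<Sum>k\<in>UNIV. \<bar>Mhat x $ k $ k\<bar>) * (2 * ?h)"
    by (rule sum_distrib_right[symmetric])
  finally show ?thesis by (simp add: mult_ac)
qed



lemma P_diff:
  fixes Mhat J Q Q' :: "nat \<times> nat \<Rightarrow> real^'n^'n" and b :: 'n and Delta mu :: real and n1 n2 :: nat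
  assumes D: "Delta > 0" and mu: "mu > 0"
    and diag: "\<forall>x a b. a \<noteq> b \<longrightarrow> Mhat x $ a $ b = 0"
    and oQ: "\<forall>x\<in>sites n1 n2. orthogonal_matrix (Q x)"
    and oQ': "\<forall>x\<in>sites n1 n2. orthogonal_matrix (Q' x)"
  defines "G \<equiv> inv_into (fields n1 n2) (Kop Delta n1 n2 mu (Mfield Mhat Q)) (Jcol n1 n2 J b)"
    and "G' \<equiv> inv_into (fields n1 n2) (Kop Delta n1 n2 mu (Mfield Mhat Q')) (Jcol n1 n2 J b)"
  shows "cmod ((\<Sum>x\<in>sites n1 n2. \<Sum>a\<in>UNIV. complex_of_real (J x $ a $ b) * G x $ a)
             - (\<Sum>x\<in>sites n1 n2. \<Sum>a\<in>UNIV. complex_of_real (J x $ a $ b) * G' x $ a))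
     \<le> (\<Sum>x\<in>sites n1 n2. \<Sum>a\<in>UNIV. \<bar>J x $ a $ b\<bar>) * (1 / mu)
        * (2 * real CARD('n) * real CARD('n) * (\<Sum>y\<in>sites n1 n2. \<Sum>k\<in>UNIV. \<bar>Mhat y $ k $ k\<bar>))
        * (nrm n1 n2 (Jcol n1 n2 J b) / mu) * (\<Sum>x\<in>sites n1 n2. hs_norm (Q x - Q' x))"
proof -
  let ?S = "sites n1 n2"
  let ?K = "Kop Delta n1 n2 mu (Mfield Mhat Q)"
  let ?K' = "Kop Delta n1 n2 mu (Mfield Mhat Q')"
  let ?Jc = "Jcol n1 n2 J b"
  let ?Cm = "\<Sum>y\<in>?S. \<Sum>k\<in>UNIV. \<bar>Mhat y $ k $ k\<bar>"
  let ?cJ = "\<Sum>x\<in>?S. \<Sum>a\<in>UNIV. \<bar>J x $ a $ b\<bar>"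
  let ?H = "\<Sum>x\<in>?S. hs_norm (Q x - Q' x)"
  have sym: "\<forall>x\<in>?S. transpose (Mfield Mhat Q x) = Mfield Mhat Q x"
    "\<forall>x\<in>?S. transpose (Mfield Mhat Q' x) = Mfield Mhat Q' x"
    using Mfield_sym[OF diag] by blast+
  have bij: "bij_betw ?K (fields n1 n2) (fields n1 n2)" "bij_betw ?K' (fields n1 n2) (fields n1 n2)"
    using Kop_bij[OF D mu sym(1)] Kop_bij[OF D mu sym(2)] by blast+
  have Jf: "?Jc \<in> fields n1 n2" by (simp add: Jcol_def fields_def)
  have Jim: "?Jc \<in> ?K ` fields n1 n2" "?Jc \<in> ?K' ` fields n1 n2"
    using bij Jf by (simp_all add: bij_betw_def)
  have GK: "?K G = ?Jc" "?K' G' = ?Jc" unfolding G_def G'_def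
    using Jim by (simp_all add: f_inv_into_f)
  define Dl where "Dl = G - G'"
  have step1: "cmod ((\<Sum>x\<in>?S. \<Sum>a\<in>UNIV. complex_of_real (J x $ a $ b) * G x $ a)
             - (\<Sum>x\<in>?S. \<Sum>a\<in>UNIV. complex_of_real (J x $ a $ b) * G' x $ a)) \<le> ?cJ * nrm n1 n2 Dl"
  proof -
    have "(\<Sum>x\<in>?S. \<Sum>a\<in>UNIV. complex_of_real (J x $ a $ b) * G x $ a)
             - (\<Sum>x\<in>?S. \<Sum>a\<in>UNIV. complex_of_real (J x $ a $ b) * G' x $ a)
        = (\<Sum>x\<in>?S. \<Sum>a\<in>UNIV. complex_of_real (J x $ a $ b) * Dl x $ a)"
      by (simp add: Dl_def sum_subtractf[symmetric] right_diff_distrib)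
    also have "cmod \<dots> \<le> (\<Sum>x\<in>?S. \<Sum>a\<in>UNIV. \<bar>J x $ a $ b\<bar> * nrm n1 n2 Dl)"
    proof (rule order_trans[OF norm_sum sum_mono])
      fix x assume x: "x \<in> ?S"
      have nx: "norm (Dl x) \<le> nrm n1 n2 Dl"
        unfolding nrm_def by (rule member_le_L2_set) (use x in auto)
      show "cmod (\<Sum>a\<in>UNIV. complex_of_real (J x $ a $ b) * Dl x $ a) \<le> (\<Sum>a\<in>UNIV. \<bar>J x $ a $ b\<bar> * nrm n1 n2 Dl)"
      proof (rule order_trans[OF norm_sum sum_mono])
        fix a
        have "norm (Dl x $ a) \<le> nrm n1 n2 Dl"
          using Finite_Cartesian_Product.norm_nth_le[of "Dl x" a] nx by linarith
        then show "cmod (complex_of_real (J x $ a $ b) * Dl x $ a) \<le> \<bar>J x $ a $ b\<bar> * nrm n1 n2 Dl"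
          by (simp add: norm_mult mult_left_mono)
      qed
    qed
    also have "\<dots> = ?cJ * nrm n1 n2 Dl"
      by (simp add: sum_distrib_right)
    finally show ?thesis .
  qed
  have KD: "?K Dl = ?K' G' - ?K G'"
    unfolding Dl_def by (simp add: Kop_diff GK)
  have step2: "mu * nrm n1 n2 Dl \<le> nrm n1 n2 (?K' G' - ?K G')"
    using inv_bound[OF D mu sym(1), of Dl] KD by simp
  have step4: "mu * nrm n1 n2 G' \<le> nrm n1 n2 ?Jc"
    using inv_bound[OF D mu sym(2), of G'] GK by simp
  have step3: "nrm n1 n2 (?K' G' - ?K G') \<le> (2 * real CARD('n) * real CARD('n) * ?Cm) * ?H * nrm n1 n2 G'"
  proof -
    have "nrm n1 n2 (?K' G' - ?K G') \<le> (\<Sum>x\<in>?S. norm ((?K' G' - ?K G') x))"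
      unfolding nrm_def by (rule L2_set_le_sum) simp
    also have "\<dots> \<le> (\<Sum>x\<in>?S. (2 * real CARD('n) * real CARD('n) * ?Cm) * hs_norm (Q x - Q' x) * nrm n1 n2 G')"
    proof (rule sum_mono)
      fix x assume x: "x \<in> ?S"
      have ent: "\<bar>(Mfield Mhat Q x - Mfield Mhat Q' x) $ a $ a'\<bar> \<le> 2 * ?Cm * hs_norm (Q x - Q' x)" for a a'
      proof -
        have "\<bar>(Mfield Mhat Q x - Mfield Mhat Q' x) $ a $ a'\<bar> \<le> 2 * (\<Sum>k\<in>UNIV. \<bar>Mhat x $ k $ k\<bar>) * hs_norm (Q x - Q' x)"
          using Mdiff_entry[OF diag, of Q x Q' a a'] oQ oQ' x by simp
        also have "\<dots> \<le> 2 * ?Cm * hs_norm (Q x - Q' x)"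
        proof -
          have "(\<Sum>k\<in>UNIV. \<bar>Mhat x $ k $ k\<bar>) \<le> ?Cm"
            by (rule member_le_sum[where f="\<lambda>y. \<Sum>k\<in>UNIV. \<bar>Mhat y $ k $ k\<bar>"]) (use x in \<open>auto intro: sum_nonneg\<close>)
          moreover have "0 \<le> hs_norm (Q x - Q' x)" by (simp add: hs_norm_def sum_nonneg)
          ultimately show ?thesis by (simp add: mult_right_mono)
        qed
        finally show ?thesis .
      qed
      have "norm ((?K' G' - ?K G') x) = norm (mulM (Mfield Mhat Q x - Mfield Mhat Q' x) (G' x))"
        using Kop_diffM[OF x, where Delta=Delta and mu=mu and M'="Mfield Mhat Q'" and G=G' and M="Mfield Mhat Q"] by simp
      also have "\<dots> \<le> (\<Sum>a\<in>UNIV. \<Sum>a'\<in>UNIV. \<bar>(Mfield Mhat Q x - Mfield Mhat Q' x) $ a $ a'\<bar>) * norm (G' x)"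
        by (rule mulM_norm)
      also have "\<dots> \<le> (\<Sum>a\<in>(UNIV::'n set). \<Sum>a'\<in>(UNIV::'n set). 2 * ?Cm * hs_norm (Q x - Q' x)) * nrm n1 n2 G'"
      proof (rule mult_mono)
        show "(\<Sum>a\<in>UNIV. \<Sum>a'\<in>UNIV. \<bar>(Mfield Mhat Q x - Mfield Mhat Q' x) $ a $ a'\<bar>)
            \<le> (\<Sum>a\<in>(UNIV::'n set). \<Sum>a'\<in>(UNIV::'n set). 2 * ?Cm * hs_norm (Q x - Q' x))"
          by (intro sum_mono ent)
        show "norm (G' x) \<le> nrm n1 n2 G'"
          unfolding nrm_def by (rule member_le_L2_set) (use x in auto)
        show "0 \<le> (\<Sum>a\<in>(UNIV::'n set). \<Sum>a'\<in>(UNIV::'n set). 2 * ?Cm * hs_norm (Q x - Q' x))"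
          by (intro sum_nonneg) (simp add: hs_norm_def sum_nonneg)
      qed simp
      also have "\<dots> = (2 * real CARD('n) * real CARD('n) * ?Cm) * hs_norm (Q x - Q' x) * nrm n1 n2 G'"
        by (simp add: mult_ac)
      finally show "norm ((?K' G' - ?K G') x) \<le> (2 * real CARD('n) * real CARD('n) * ?Cm) * hs_norm (Q x - Q' x) * nrm n1 n2 G'" .
    qed
    also have "\<dots> = (2 * real CARD('n) * real CARD('n) * ?Cm) * ?H * nrm n1 n2 G'"
      by (simp add: sum_distrib_left sum_distrib_right)
    finally show ?thesis .
  qed
  have cJ0: "0 \<le> ?cJ" by (simp add: sum_nonneg)
  have Cm0: "0 \<le> ?Cm" by (simp add: sum_nonneg)
  have H0: "0 \<le> ?H" by (simp add: sum_nonneg hs_norm_def)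
  have "nrm n1 n2 Dl \<le> (1 / mu) * nrm n1 n2 (?K' G' - ?K G')"
    using step2 mu by (simp add: field_simps)
  also have "\<dots> \<le> (1 / mu) * ((2 * real CARD('n) * real CARD('n) * ?Cm) * ?H * nrm n1 n2 G')"
    using step3 mu by (intro mult_left_mono) auto
  also have "\<dots> \<le> (1 / mu) * ((2 * real CARD('n) * real CARD('n) * ?Cm) * ?H * (nrm n1 n2 ?Jc / mu))"
  proof -
    have "nrm n1 n2 G' \<le> nrm n1 n2 ?Jc / mu" using step4 mu by (simp add: field_simps)
    then show ?thesis using mu Cm0 H0
      by (intro mult_left_mono) (auto intro!: mult_nonneg_nonneg)
  qed
  finally have "?cJ * nrm n1 n2 Dl \<le> ?cJ * ((1 / mu) * ((2 * real CARD('n) * real CARD('n) * ?Cm) * ?H * (nrm n1 n2 ?Jc / mu)))"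
    using cJ0 by (rule mult_left_mono)
  with step1 show ?thesis by (simp add: mult_ac)
qed



lemma GK_lemma:
  fixes Mhat J Q :: "nat \<times> nat \<Rightarrow> real^'n^'n"
  assumes D: "Delta > 0" and mu: "mu > 0"
    and diag: "\<forall>x a b. a \<noteq> b \<longrightarrow> Mhat x $ a $ b = 0"
  shows "Kop Delta n1 n2 mu (Mfield Mhat Q) (inv_into (fields n1 n2) (Kop Delta n1 n2 mu (Mfield Mhat Q)) (Jcol n1 n2 J b)) = Jcol n1 n2 J b"
proof -
  have sym: "\<forall>x\<in>sites n1 n2. transpose (Mfield Mhat Q x) = Mfield Mhat Q x"
    using Mfield_sym[OF diag] by blast
  have bij: "bij_betw (Kop Delta n1 n2 mu (Mfield Mhat Q)) (fields n1 n2) (fields n1 n2)"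
    using Kop_bij[OF D mu sym] by blast
  have Jf: "Jcol n1 n2 J b \<in> fields n1 n2" by (simp add: Jcol_def fields_def)
  then show ?thesis using bij by (simp add: bij_betw_def f_inv_into_f)
qed

theorem mainTheorem1:
  fixes Delta mu :: real and n1 n2 :: nat
    and Mhat J :: "nat \<times> nat \<Rightarrow> real^'n^'n"
  assumes "Delta > 0" and "mu > 0" and "n1 \<ge> 1" and "n2 \<ge> 1"
    and "\<forall>x a b. a \<noteq> b \<longrightarrow> Mhat x $ a $ b = 0"
  shows "(\<forall>Q. (\<forall>x\<in>sites n1 n2. orthogonal_matrix (Q x)) \<longrightarrow>
            bij_betw (Kop Delta n1 n2 mu (Mfield Mhat Q)) (fields n1 n2) (fields n1 n2))
       \<and> (\<exists>C. \<forall>Q Q'. (\<forall>x\<in>sites n1 n2. orthogonal_matrix (Q x)) \<longrightarrow>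
                     (\<forall>x\<in>sites n1 n2. orthogonal_matrix (Q' x)) \<longrightarrow>
            cmod (gen_fun Delta n1 n2 mu Mhat J Q - gen_fun Delta n1 n2 mu Mhat J Q')
              \<le> C * field_dist Delta n1 n2 Q Q')"
proof -
  note D = assms(1) and mu = assms(2) and diag = assms(5)
  let ?S = "sites n1 n2"
  have part1: "\<forall>Q. (\<forall>x\<in>sites n1 n2. orthogonal_matrix (Q x)) \<longrightarrow>
            bij_betw (Kop Delta n1 n2 mu (Mfield Mhat Q)) (fields n1 n2) (fields n1 n2)"
  proof (intro allI impI)
    fix Q :: "nat \<times> nat \<Rightarrow> real^'n^'n"
    have sym: "\<forall>x\<in>sites n1 n2. transpose (Mfield Mhat Q x) = Mfield Mhat Q x"
      using Mfield_sym[OF diag] by blast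
    show "bij_betw (Kop Delta n1 n2 mu (Mfield Mhat Q)) (fields n1 n2) (fields n1 n2)"
      using Kop_bij[OF D mu sym] by blast
  qed
  define GG where "GG Q b = inv_into (fields n1 n2) (Kop Delta n1 n2 mu (Mfield Mhat Q)) (Jcol n1 n2 J b)"
    for Q :: "nat \<times> nat \<Rightarrow> real^'n^'n" and b :: 'n
  define P where "P Q b = (\<Sum>x\<in>?S. \<Sum>a\<in>UNIV. complex_of_real (J x $ a $ b) * GG Q b x $ a)"
    for Q :: "nat \<times> nat \<Rightarrow> real^'n^'n" and b :: 'n
  define A where "A b = (\<Sum>x\<in>?S. \<Sum>a\<in>UNIV. \<bar>J x $ a $ b\<bar>) * (1 / mu)
        * (2 * real CARD('n) * real CARD('n) * (\<Sum>y\<in>?S. \<Sum>k\<in>UNIV. \<bar>Mhat y $ k $ k\<bar>))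
        * (nrm n1 n2 (Jcol n1 n2 J b) / mu)" for b :: 'n
  define C where "C = (1/2) * (\<Sum>b\<in>UNIV. A b)"
  define E where "E Q = - (1/2) * (complex_of_real (Delta\<^sup>2) * (\<Sum>b\<in>UNIV. P Q b))"
    for Q :: "nat \<times> nat \<Rightarrow> real^'n^'n"
  have gen: "gen_fun Delta n1 n2 mu Mhat J Q = exp (E Q)" for Q
  proof -
    have "(\<Sum>x\<in>?S. \<Sum>b\<in>UNIV. \<Sum>a\<in>UNIV. complex_of_real (J x $ a $ b) * GG Q b x $ a) = (\<Sum>b\<in>UNIV. P Q b)"
      unfolding P_def by (rule sum.swap)
    then show ?thesis
      unfolding gen_fun_def Let_def lint_def E_def GG_def[symmetric]
      by (simp add: cscale)
  qed
  have ReE: "Re (E Q) \<le> 0" for Q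
  proof -
    have "0 \<le> Re (P Q b)" for b
      unfolding P_def GG_def
      using re_nonneg[OF D mu _ GK_lemma[OF D mu diag]] Mfield_sym[OF diag] by blast
    then have "0 \<le> Re (\<Sum>b\<in>UNIV. P Q b)" by (simp add: Re_sum sum_nonneg)
    moreover have "Re (E Q) = - (1/2) * (Delta\<^sup>2 * Re (\<Sum>b\<in>UNIV. P Q b))"
      unfolding E_def by simp
    ultimately show ?thesis by simp
  qed
  have part2: "cmod (gen_fun Delta n1 n2 mu Mhat J Q - gen_fun Delta n1 n2 mu Mhat J Q')
              \<le> C * field_dist Delta n1 n2 Q Q'"
    if oQ: "\<forall>x\<in>sites n1 n2. orthogonal_matrix (Q x)" and oQ': "\<forall>x\<in>sites n1 n2. orthogonal_matrix (Q' x)"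
    for Q Q'
  proof -
    let ?H = "\<Sum>x\<in>?S. hs_norm (Q x - Q' x)"
    have "cmod (gen_fun Delta n1 n2 mu Mhat J Q - gen_fun Delta n1 n2 mu Mhat J Q') \<le> cmod (E Q - E Q')"
      unfolding gen by (rule exp_lip[OF ReE ReE])
    also have "E Q - E Q' = - (1/2) * (complex_of_real (Delta\<^sup>2) * (\<Sum>b\<in>UNIV. P Q b - P Q' b))"
      unfolding E_def by (simp add: sum_subtractf algebra_simps)
    also have "cmod \<dots> = (1/2) * (Delta\<^sup>2 * cmod (\<Sum>b\<in>UNIV. P Q b - P Q' b))"
      by (simp add: norm_mult norm_power)
    also have "\<dots> \<le> (1/2) * (Delta\<^sup>2 * (\<Sum>b\<in>UNIV. A b * ?H))"
    proof -
      have "cmod (\<Sum>b\<in>UNIV. P Q b - P Q' b) \<le> (\<Sum>b\<in>UNIV. cmod (P Q b - P Q' b))"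
        by (rule norm_sum)
      also have "\<dots> \<le> (\<Sum>b\<in>UNIV. A b * ?H)"
      proof (rule sum_mono)
        fix b
        show "cmod (P Q b - P Q' b) \<le> A b * ?H"
          unfolding P_def GG_def A_def
          by (rule P_diff[OF D mu diag oQ oQ'])
      qed
      finally show ?thesis by (simp add: mult_left_mono)
    qed
    also have "\<dots> = C * field_dist Delta n1 n2 Q Q'"
      unfolding C_def field_dist_def lint_def by (simp add: sum_distrib_right mult_ac)
    finally show ?thesis .
  qed
  show ?thesis using part1 part2 by blast
qed

end
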